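(* Let $m\ge1$ and $\mathcal{B}=\mathcal{B}_{1,m}=G_m$ (the block of cells of size $1$). Then $$\langle\chi_{\mathcal{B}},\ \det\cdot\varepsilon\cdot\psi\rangle_{\mathcal{B}}=\frac{\binom{2m}{m}}{4^m},\qquad \langle\chi_{\mathcal{B}},\ \det\cdot\psi\rangle_{\mathcal{B}}=\frac{(-1)^{m+1}}{2m}\cdot\frac{\binom{2m-2}{m-1}}{4^{m-1}}.$$ In particular the first quantity equals $|L_m|/|G_m|$, where $L_m$ is the set of elements of $G_m$ satisfying condition (L).
   Context: $G_m$ is the signed permutation group of bijections of $\{\pm1,\dots,\pm m\}$ commuting with negation; write $g\in G_m$ as $(s_1,\dots,s_m;\sigma)$, $s_i\in\{\pm1\}$, $\sigma\in S_m$ (the signed permutation matrix with $(\sigma(i),i)$ entry $s_i$). Here $\psi\equiv1$, $\varepsilon(g)=\operatorname{sgn}(\sigma)$, and $\det(g)=\operatorname{sgn}(\sigma)$ is the sign of the underlying permutation (signs forgotten). An element $g\in G_m$ satisfies condition (L) if for every $i$ the points $i$ and $-i$ lie in different orbits of $\langle g\rangle$ on $\{\pm1,\dots,\pm m\}$; $\chi_{\mathcal{B}}$ is the indicator of (L). For functions $\alpha,\beta$ on a finite group $H$, $\langle\alpha,\beta\rangle_H=\frac1{|H|}\sum_{h\in H}\alpha(h)\overline{\beta(h)}$. *)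

theory Defs
  imports Complex_Main "HOL-Combinatorics.Permutations"
begin

definition pm_set :: "nat \<Rightarrow> int set" where
  "pm_set m = {i. 1 \<le> \<bar>i\<bar> \<and> \<bar>i\<bar> \<le> int m}"

definition signed_perms :: "nat \<Rightarrow> (int \<Rightarrow> int) set" where
  "signed_perms m = {g. g permutes pm_set m \<and> (\<forall>i\<in>pm_set m. g (- i) = - g i)}"

definition underlying_perm :: "nat \<Rightarrow> (int \<Rightarrow> int) \<Rightarrow> int \<Rightarrow> int" where
  "underlying_perm m g = (\<lambda>i. if 1 \<le> i \<and> i \<le> int m then \<bar>g i\<bar> else i)"

definition det_char :: "nat \<Rightarrow> (int \<Rightarrow> int) \<Rightarrow> complex" where
  "det_char m g = of_int (sign (underlying_perm m g))"

definition eps_char :: "nat \<Rightarrow> (int \<Rightarrow> int) \<Rightarrow> complex" where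
  "eps_char m g = of_int (sign (underlying_perm m g))"

definition psi_char :: "(int \<Rightarrow> int) \<Rightarrow> complex" where
  "psi_char g = 1"

text \<open>Condition (L): for every i, i and -i lie in different orbits of <g>.\<close>
definition cond_L :: "nat \<Rightarrow> (int \<Rightarrow> int) \<Rightarrow> bool" where
  "cond_L m g = (\<forall>i\<in>pm_set m. \<not> (\<exists>k::nat. (g ^^ k) i = - i))"

definition chi_L :: "nat \<Rightarrow> (int \<Rightarrow> int) \<Rightarrow> complex" where
  "chi_L m g = (if cond_L m g then 1 else 0)"

definition L_set :: "nat \<Rightarrow> (int \<Rightarrow> int) set" where
  "L_set m = {g \<in> signed_perms m. cond_L m g}"

definition inner_prod :: "'a set \<Rightarrow> ('a \<Rightarrow> complex) \<Rightarrow> ('a \<Rightarrow> complex) \<Rightarrow> complex" where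
  "inner_prod H \<alpha> \<beta> = (\<Sum>h\<in>H. \<alpha> h * cnj (\<beta> h)) / of_nat (card H)"

end

theory Submission
  imports Defs
begin


definition sw :: "int \<Rightarrow> int \<Rightarrow> int \<Rightarrow> int" where
  "sw n b x = (if x = n then b else if x = b then n else if x = -n then -b else if x = -b then -n else x)"

lemma pm_set_Suc: "pm_set (Suc m) = insert (int (Suc m)) (insert (- int (Suc m)) (pm_set m))"
  unfolding pm_set_def by auto

lemma pm_set_0: "pm_set 0 = {}" unfolding pm_set_def by auto

lemma finite_pm_set: "finite (pm_set m)"
  by (induct m) (simp_all add: pm_set_0 pm_set_Suc)

lemma card_pm_set: "card (pm_set m) = 2 * m"
proof (induct m)
  case 0 then show ?case by (simp add: pm_set_0)
next
  case (Suc m)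
  have "int (Suc m) \<notin> pm_set m" "- int (Suc m) \<notin> pm_set m" unfolding pm_set_def by auto
  then show ?case using Suc finite_pm_set[of m] by (simp add: pm_set_Suc)
qed

lemma pm_neg: "x \<in> pm_set m \<longleftrightarrow> - x \<in> pm_set m" unfolding pm_set_def by auto

lemma sw_invol: "b \<noteq> 0 \<Longrightarrow> n > 0 \<Longrightarrow> sw n b (sw n b x) = x"
  unfolding sw_def by auto

lemma sw_neg: "b \<noteq> 0 \<Longrightarrow> n > 0 \<Longrightarrow> sw n b (- x) = - sw n b x"
  unfolding sw_def by auto

lemma sw_id: "sw n n = id" unfolding sw_def by auto

lemma sg_neg_all: assumes "g \<in> signed_perms m" shows "g (- x) = - g x"
proof (cases "x \<in> pm_set m")
  case True then show ?thesis using assms unfolding signed_perms_def by auto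
next
  case False
  then have "-x \<notin> pm_set m" using pm_neg by blast
  moreover have "g permutes pm_set m" using assms unfolding signed_perms_def by auto
  ultimately show ?thesis using False by (simp add: permutes_not_in)
qed

lemma funpow_neg: fixes g :: "int \<Rightarrow> int" assumes "\<And>x. g (- x) = - g x" shows "(g ^^ k) (- x) = - ((g ^^ k) x)"
  by (induct k) (auto simp add: assms)




locale ins =
  fixes g h :: "'a \<Rightarrow> 'a" and a c :: 'a
  assumes hpre: "\<And>p. h p = c \<Longrightarrow> p = c"
    and hc: "h c = c" and ga: "g a = c" and gc: "g c = h a"
    and geq: "\<And>x. x \<noteq> a \<Longrightarrow> x \<noteq> c \<Longrightarrow> g x = h x" and ac: "a \<noteq> c"
begin

lemma ha: "h a \<noteq> c" using hpre ac by blast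

lemma hk_ne: "z \<noteq> c \<Longrightarrow> (h ^^ k) z \<noteq> c"
proof (induct k)
  case (Suc k) then show ?case using hpre[of "(h ^^ k) z"] by auto
qed simp

lemma dir1: assumes "z \<noteq> c" shows "\<exists>k'. (g ^^ k') z = (h ^^ k) z"
proof (induct k)
  case 0 show ?case by (rule exI[of _ 0]) simp
next
  case (Suc k)
  then obtain k' where k': "(g ^^ k') z = (h ^^ k) z" by blast
  have ne: "(h ^^ k) z \<noteq> c" using hk_ne assms by blast
  show ?case
  proof (cases "(h ^^ k) z = a")
    case True
    then have "(g ^^ Suc (Suc k')) z = (h ^^ Suc k) z" using k' by (simp add: ga gc)
    then show ?thesis by blast
  next
    case False
    then have "(g ^^ Suc k') z = (h ^^ Suc k) z" using k' ne by (simp add: geq)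
    then show ?thesis by blast
  qed
qed

lemma dir2: assumes "z \<noteq> c" shows "(g ^^ k) z \<noteq> c \<Longrightarrow> \<exists>k'. (h ^^ k') z = (g ^^ k) z"
proof (induct k rule: less_induct)
  case (less k)
  show ?case
  proof (cases k)
    case 0 then show ?thesis by (intro exI[of _ 0]) simp
  next
    case (Suc j)
    show ?thesis
    proof (cases "(g ^^ j) z = c")
      case False
      then obtain k' where k': "(h ^^ k') z = (g ^^ j) z" using less Suc by blast
      have "(g ^^ j) z \<noteq> a" using less(2) Suc ga by auto
      then have "(h ^^ Suc k') z = (g ^^ k) z" using k' False Suc by (simp add: geq)
      then show ?thesis by blast
    next
      case True
      then obtain i where j: "j = Suc i" using assms by (cases j) auto
      have p: "g ((g ^^ i) z) = c" using True j by simp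
      have "(g ^^ i) z = a"
      proof (rule ccontr)
        assume na: "(g ^^ i) z \<noteq> a"
        show False
        proof (cases "(g ^^ i) z = c")
          case True then show False using p gc ha by simp
        next
          case False then have "h ((g ^^ i) z) = c" using p na geq by simp
          then show False using hpre False by blast
        qed
      qed
      moreover have "(g ^^ i) z \<noteq> c" using calculation ac by simp
      ultimately obtain k' where k': "(h ^^ k') z = a" using less Suc j by force
      have "(h ^^ Suc k') z = (g ^^ k) z" using k' True Suc gc by simp
      then show ?thesis by blast
    qed
  qed
qed

lemma reach_iff: assumes "z \<noteq> c" "w \<noteq> c"
  shows "(\<exists>k. (g ^^ k) z = w) \<longleftrightarrow> (\<exists>k. (h ^^ k) z = w)"
  using dir1[OF assms(1)] dir2[OF assms(1)] assms(2) by metis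

end

lemma pred_reach: assumes "(g ^^ k) z = w" "z \<noteq> w" "\<And>y. g y = w \<Longrightarrow> y = p" "z \<noteq> p"
  shows "\<exists>k'. (g ^^ k') (g z) = p"
proof -
  obtain j where j: "k = Suc j" using assms by (cases k) auto
  have "g ((g ^^ j) z) = w" using assms(1) j by simp
  then have "(g ^^ j) z = p" using assms(3) by blast
  moreover obtain i where "j = Suc i" using calculation assms(4) by (cases j) auto
  ultimately have "(g ^^ i) (g z) = p" by (simp add: funpow_Suc_right del: funpow.simps)
  then show ?thesis by blast
qed




lemma sp_basic:
  assumes "h \<in> signed_perms m"
  shows "h permutes pm_set m" "inj h" "h (int (Suc m)) = int (Suc m)" "h (- int (Suc m)) = - int (Suc m)"
    "\<And>x. h x \<in> pm_set m \<longleftrightarrow> x \<in> pm_set m"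
proof -
  show p: "h permutes pm_set m" using assms unfolding signed_perms_def by auto
  show "inj h" using p by (rule permutes_inj)
  show "h (int (Suc m)) = int (Suc m)" "h (- int (Suc m)) = - int (Suc m)"
    using p by (auto intro!: permutes_not_in simp: pm_set_def)
  show "\<And>x. h x \<in> pm_set m \<longleftrightarrow> x \<in> pm_set m" using p by (rule permutes_in_image)
qed

lemma L_step:
  assumes h: "h \<in> signed_perms m" and b: "b \<in> pm_set m"
  shows "cond_L (Suc m) (sw (int (Suc m)) b \<circ> h) = cond_L m h"
proof -
  define n where "n = int (Suc m)"
  define g where "g = sw n b \<circ> h"
  note hb = sp_basic[OF h, folded n_def]
  have bn: "b \<noteq> n" "b \<noteq> -n" "b \<noteq> 0" "-b \<noteq> n" using b unfolding pm_set_def n_def by auto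
  obtain a where a: "a \<in> pm_set m" "h a = b"
    using b permutes_image[OF hb(1)] by (metis imageE)
  have an: "a \<noteq> n" "a \<noteq> -n" "a \<noteq> 0" "-a \<noteq> n" "a \<noteq> -a" using a(1) unfolding pm_set_def n_def by auto
  have hneg: "\<And>x. h (- x) = - h x" using sg_neg_all[OF h] .
  have gneg: "\<And>x. g (- x) = - g x" unfolding g_def using hneg sw_neg[of b n] bn by (simp add: n_def)
  have g1: "g a = n" "g n = b" "g (-a) = -n" "g (-n) = -b"
    unfolding g_def using a(2) hb(3,4) hneg bn sw_invol[of b n] by (auto simp: sw_def n_def)
  have g2: "g x = h x" if "x \<noteq> a" "x \<noteq> -a" "x \<noteq> n" "x \<noteq> -n" for x
  proof -
    have "h x \<noteq> b" using a(2) that hb(2) by (metis injD)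
    moreover have "h x \<noteq> -b" using a(2) that hb(2) hneg[of a] by (metis injD)
    moreover have "h x \<noteq> n" using hb(2,3) that by (metis injD)
    moreover have "h x \<noteq> -n" using hb(2,4) that by (metis injD)
    ultimately show ?thesis unfolding g_def by (simp add: sw_def)
  qed
  define h1 where "h1 x = (if x = a then n else if x = n then b else h x)" for x
  have hpre: "p = n" if "h p = n" for p using that hb(2,3) by (metis injD)
  interpret i1: ins h1 h a n
  proof
    show "\<And>p. h p = n \<Longrightarrow> p = n" by (rule hpre)
    show "h n = n" by (rule hb(3))
    show "h1 a = n" unfolding h1_def by simp
    show "h1 n = h a" unfolding h1_def using an a by simp
    show "\<And>x. x \<noteq> a \<Longrightarrow> x \<noteq> n \<Longrightarrow> h1 x = h x" unfolding h1_def by simp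
    show "a \<noteq> n" by (rule an(1))
  qed
  interpret i2: ins g h1 "-a" "-n"
  proof
    show "p = -n" if "h1 p = -n" for p
    proof -
      have "p \<noteq> a" using that an(2) bn unfolding h1_def by (auto simp: n_def)
      moreover have "p \<noteq> n" using that bn unfolding h1_def using an by auto
      ultimately have "h p = -n" using that unfolding h1_def by simp
      then show ?thesis using hb(2,4) by (metis injD)
    qed
    show "h1 (-n) = -n" unfolding h1_def using an hb(4) by (simp add: n_def)
    show "g (-a) = -n" by (rule g1(3))
    show "g (-n) = h1 (-a)" unfolding h1_def using g1(4) an hneg a(2) by (simp add: n_def)
    show "g x = h1 x" if "x \<noteq> -a" "x \<noteq> -n" for x
    proof (cases "x = a \<or> x = n")
      case True then show ?thesis unfolding h1_def using g1 an by auto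
    next
      case False then show ?thesis unfolding h1_def using g2 that by simp
    qed
    show "-a \<noteq> -n" using an by simp
  qed
  have reach: "(\<exists>k. (g ^^ k) z = w) \<longleftrightarrow> (\<exists>k. (h ^^ k) z = w)" if "z \<in> pm_set m" "w \<in> pm_set m" for z w
  proof -
    have "z \<noteq> n" "z \<noteq> -n" "w \<noteq> n" "w \<noteq> -n" using that unfolding pm_set_def n_def by auto
    then show ?thesis using i1.reach_iff i2.reach_iff by simp
  qed
  have ginj: "y = -a" if "g y = -n" for y
  proof -
    have "inj (sw n b)" using sw_invol[of b n] bn by (metis injI n_def of_nat_0_less_iff zero_less_Suc)
    then have "inj g" unfolding g_def using hb(2) by (simp add: inj_compose)
    then show ?thesis using that g1(3) by (metis injD)
  qed
  have nL: "\<not> (\<exists>k. (g ^^ k) n = - n)" if L: "cond_L m h"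
  proof
    assume "\<exists>k. (g ^^ k) n = - n"
    then obtain k where "(g ^^ k) n = -n" by blast
    from pred_reach[OF this _ ginj] an have "\<exists>k'. (g ^^ k') b = - a" using g1 by (simp add: n_def)
    then obtain k' where "(h ^^ k') b = - a" using reach[of b "-a"] b a pm_neg by blast
    then have "(h ^^ Suc k') b = - b" using hneg a by simp
    then show False using L b unfolding cond_L_def by blast
  qed
  show ?thesis
  proof
    assume L: "cond_L (Suc m) (sw (int (Suc m)) b \<circ> h)"
    show "cond_L m h" unfolding cond_L_def
    proof
      fix i assume i: "i \<in> pm_set m"
      then have "i \<in> pm_set (Suc m)" by (simp add: pm_set_Suc)
      then have "\<not> (\<exists>k. (g ^^ k) i = - i)" using L unfolding cond_L_def g_def n_def by blast
      then show "\<not> (\<exists>k. (h ^^ k) i = - i)" using reach[of i "-i"] i pm_neg by blast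
    qed
  next
    assume L: "cond_L m h"
    show "cond_L (Suc m) (sw (int (Suc m)) b \<circ> h)" unfolding cond_L_def g_def[symmetric, unfolded n_def]
    proof
      fix i assume "i \<in> pm_set (Suc m)"
      then consider "i = n" | "i = -n" | "i \<in> pm_set m" by (auto simp: pm_set_Suc n_def)
      then show "\<not> (\<exists>k. (g ^^ k) i = - i)"
      proof cases
        case 1 then show ?thesis using nL[OF L] by simp
      next
        case 2 then show ?thesis using nL[OF L] funpow_neg[of g, OF gneg] by (metis minus_minus)
      next
        case 3 then show ?thesis using reach[of i "-i"] pm_neg L unfolding cond_L_def by blast
      qed
    qed
  qed
qed




lemma U_permutes:
  assumes h: "h \<in> signed_perms m"
  shows "underlying_perm m h permutes {1..int m}"
proof (rule inj_imp_permutes)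
  note hb = sp_basic[OF h]
  have hneg: "\<And>x. h (- x) = - h x" using sg_neg_all[OF h] .
  have inpm: "i \<in> pm_set m" if "i \<in> {1..int m}" for i using that unfolding pm_set_def by auto
  show "inj_on (underlying_perm m h) {1..int m}"
  proof (rule inj_onI)
    fix x y assume x: "x \<in> {1..int m}" and y: "y \<in> {1..int m}" and e: "underlying_perm m h x = underlying_perm m h y"
    then have "\<bar>h x\<bar> = \<bar>h y\<bar>" unfolding underlying_perm_def by auto
    then have "h x = h y \<or> h x = h (- y)" using hneg by (auto simp: abs_eq_iff)
    then have "x = y \<or> x = - y" using hb(2) by (auto dest: injD)
    then show "x = y" using x y by auto
  qed
  show "finite {1..int m}" by simp
  show "underlying_perm m h x \<in> {1..int m}" if "x \<in> {1..int m}" for x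
  proof -
    have "h x \<in> pm_set m" using hb(5) inpm[OF that] by simp
    then show ?thesis using that unfolding underlying_perm_def pm_set_def by auto
  qed
  show "underlying_perm m h i = i" if "i \<notin> {1..int m}" for i
    using that unfolding underlying_perm_def by auto
qed

lemma U_perm: "h \<in> signed_perms m \<Longrightarrow> permutation (underlying_perm m h)"
  using U_permutes permutes_imp_permutation by blast

lemma U_id: assumes h: "h \<in> signed_perms m"
  shows "underlying_perm (Suc m) h = underlying_perm m h"
proof
  fix x show "underlying_perm (Suc m) h x = underlying_perm m h x"
    using sp_basic(3)[OF h] unfolding underlying_perm_def by (cases "x = int (Suc m)") auto
qed

lemma U_step: assumes h: "h \<in> signed_perms m" and b: "b \<in> pm_set m"
  shows "underlying_perm (Suc m) (sw (int (Suc m)) b \<circ> h) = transpose (int (Suc m)) \<bar>b\<bar> \<circ> underlying_perm m h"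
proof
  fix i
  define n where "n = int (Suc m)"
  have bn: "b \<noteq> n" "b \<noteq> -n" "b \<noteq> 0" "\<bar>b\<bar> \<noteq> n" "\<bar>b\<bar> \<ge> 1" "\<bar>b\<bar> \<le> int m" using b unfolding pm_set_def n_def by auto
  have sw_abs: "\<bar>sw n b y\<bar> = transpose n \<bar>b\<bar> \<bar>y\<bar>" for y
  proof -
    have "n > 0" unfolding n_def by simp
    then show ?thesis using bn unfolding sw_def transpose_def by (auto simp: abs_if)
  qed
  show "underlying_perm (Suc m) (sw (int (Suc m)) b \<circ> h) i = (transpose (int (Suc m)) \<bar>b\<bar> \<circ> underlying_perm m h) i"
  proof (cases "1 \<le> i \<and> i \<le> int (Suc m)")
    case True
    have "underlying_perm m h i = \<bar>h i\<bar>"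
      using True sp_basic(3)[OF h] unfolding underlying_perm_def by (cases "i = int (Suc m)") auto
    then show ?thesis using True sw_abs unfolding underlying_perm_def n_def by simp
  next
    case False
    then show ?thesis using bn unfolding underlying_perm_def n_def by auto
  qed
qed

lemma sign_step: assumes h: "h \<in> signed_perms m" and b: "b \<in> pm_set m"
  shows "sign (underlying_perm (Suc m) (sw (int (Suc m)) b \<circ> h)) = - (sign (underlying_perm m h) :: int)"
proof -
  have "\<bar>b\<bar> \<noteq> int (Suc m)" using b unfolding pm_set_def by auto
  then show ?thesis unfolding U_step[OF h b]
    by (simp add: sign_compose[OF permutation_swap_id U_perm[OF h]] sign_swap_id)
qed

lemma L_id: assumes h: "h \<in> signed_perms m" shows "cond_L (Suc m) h = cond_L m h"
proof -
  have fx: "(h ^^ k) x = x" if "h x = x" for k x using that by (induct k) auto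
  have "\<not> (h ^^ k) i = - i" if "i = int (Suc m) \<or> i = - int (Suc m)" for i k
    using that fx[of "int (Suc m)"] fx[of "- int (Suc m)"] sp_basic(3,4)[OF h] by auto
  then have "\<forall>i\<in>{int (Suc m), - int (Suc m)}. \<not> (\<exists>k. (h ^^ k) i = - i)" by blast
  then show ?thesis unfolding cond_L_def pm_set_Suc by blast
qed

lemma L_neg: assumes h: "h \<in> signed_perms m"
  shows "\<not> cond_L (Suc m) (sw (int (Suc m)) (- int (Suc m)) \<circ> h)"
proof -
  have "((sw (int (Suc m)) (- int (Suc m)) \<circ> h) ^^ 1) (int (Suc m)) = - int (Suc m)"
    using sp_basic(3)[OF h] by (simp add: sw_def)
  moreover have "int (Suc m) \<in> pm_set (Suc m)" by (simp add: pm_set_Suc)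
  ultimately show ?thesis unfolding cond_L_def by blast
qed




lemma sw_permutes: assumes b: "b \<in> pm_set (Suc m)"
  shows "sw (int (Suc m)) b permutes pm_set (Suc m)"
proof -
  define n where "n = int (Suc m)"
  have b0: "b \<noteq> 0" using b unfolding pm_set_def by auto
  have n0: "n > 0" unfolding n_def by simp
  have nP: "n \<in> pm_set (Suc m)" "-n \<in> pm_set (Suc m)" unfolding n_def by (auto simp: pm_set_Suc)
  have bP: "-b \<in> pm_set (Suc m)" using b pm_neg by blast
  show ?thesis unfolding n_def[symmetric]
  proof (rule inj_imp_permutes)
    show "inj_on (sw n b) (pm_set (Suc m))" using sw_invol[OF b0 n0] by (metis inj_onI)
    show "finite (pm_set (Suc m))" by (rule finite_pm_set)
    show "sw n b x \<in> pm_set (Suc m)" if "x \<in> pm_set (Suc m)" for x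
      using that nP b bP unfolding sw_def by auto
    show "sw n b x = x" if "x \<notin> pm_set (Suc m)" for x
      using that nP b bP unfolding sw_def by auto
  qed
qed

lemma G_Suc_mem: assumes h: "h \<in> signed_perms m" and b: "b \<in> pm_set (Suc m)"
  shows "sw (int (Suc m)) b \<circ> h \<in> signed_perms (Suc m)"
proof -
  have b0: "b \<noteq> 0" using b unfolding pm_set_def by auto
  have "h permutes pm_set (Suc m)" using sp_basic(1)[OF h] by (rule permutes_subset) (auto simp: pm_set_Suc)
  then have "sw (int (Suc m)) b \<circ> h permutes pm_set (Suc m)"
    using sw_permutes[OF b] by (rule permutes_compose)
  moreover have "(sw (int (Suc m)) b \<circ> h) (- i) = - (sw (int (Suc m)) b \<circ> h) i" for i
    using sg_neg_all[OF h] sw_neg[OF b0] by simp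
  ultimately show ?thesis unfolding signed_perms_def by auto
qed

lemma G_Suc_dec: assumes g: "g \<in> signed_perms (Suc m)"
  shows "g (int (Suc m)) \<in> pm_set (Suc m)" "sw (int (Suc m)) (g (int (Suc m))) \<circ> g \<in> signed_perms m"
    "sw (int (Suc m)) (g (int (Suc m))) \<circ> (sw (int (Suc m)) (g (int (Suc m))) \<circ> g) = g"
proof -
  define n where "n = int (Suc m)"
  define b where "b = g n"
  have gp: "g permutes pm_set (Suc m)" using g unfolding signed_perms_def by auto
  have nP: "n \<in> pm_set (Suc m)" unfolding n_def by (auto simp: pm_set_Suc)
  have bP: "b \<in> pm_set (Suc m)" unfolding b_def using nP gp by (simp add: permutes_in_image)
  then show "g (int (Suc m)) \<in> pm_set (Suc m)" unfolding b_def n_def .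
  have b0: "b \<noteq> 0" using bP unfolding pm_set_def by auto
  have n0: "n > 0" unfolding n_def by simp
  have gneg: "\<And>x. g (- x) = - g x" using sg_neg_all[OF g] .
  have hp: "sw n b \<circ> g permutes pm_set (Suc m)"
    using gp sw_permutes[OF bP] unfolding n_def by (rule permutes_compose)
  have fn: "(sw n b \<circ> g) n = n" "(sw n b \<circ> g) (-n) = -n" unfolding b_def using gneg b0[unfolded b_def] by (auto simp: sw_def)
  have "sw n b \<circ> g permutes pm_set m"
    using hp by (rule permutes_superset) (use fn in \<open>auto simp: pm_set_Suc n_def\<close>)
  moreover have "(sw n b \<circ> g) (- i) = - (sw n b \<circ> g) i" for i
    using gneg sw_neg[OF b0 n0] by simp
  ultimately show "sw (int (Suc m)) (g (int (Suc m))) \<circ> g \<in> signed_perms m"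
    unfolding signed_perms_def b_def n_def by auto
  show "sw (int (Suc m)) (g (int (Suc m))) \<circ> (sw (int (Suc m)) (g (int (Suc m))) \<circ> g) = g"
    using sw_invol[OF b0 n0] unfolding b_def n_def by (auto simp: fun_eq_iff)
qed

lemma G_Suc_eq: "signed_perms (Suc m) = (\<lambda>(h, b). sw (int (Suc m)) b \<circ> h) ` (signed_perms m \<times> pm_set (Suc m))"
proof
  show "(\<lambda>(h, b). sw (int (Suc m)) b \<circ> h) ` (signed_perms m \<times> pm_set (Suc m)) \<subseteq> signed_perms (Suc m)"
    using G_Suc_mem by auto
  show "signed_perms (Suc m) \<subseteq> (\<lambda>(h, b). sw (int (Suc m)) b \<circ> h) ` (signed_perms m \<times> pm_set (Suc m))"
  proof
    fix g assume g: "g \<in> signed_perms (Suc m)"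
    show "g \<in> (\<lambda>(h, b). sw (int (Suc m)) b \<circ> h) ` (signed_perms m \<times> pm_set (Suc m))"
      using G_Suc_dec[OF g] by (intro image_eqI[of _ _ "(sw (int (Suc m)) (g (int (Suc m))) \<circ> g, g (int (Suc m)))"]) auto
  qed
qed

lemma G_Suc_inj: "inj_on (\<lambda>(h, b). sw (int (Suc m)) b \<circ> h) (signed_perms m \<times> pm_set (Suc m))"
proof (rule inj_onI, clarify)
  fix h b h' b' assume h: "h \<in> signed_perms m" and b: "b \<in> pm_set (Suc m)"
    and h': "h' \<in> signed_perms m" and b': "b' \<in> pm_set (Suc m)"
    and e: "sw (int (Suc m)) b \<circ> h = sw (int (Suc m)) b' \<circ> h'"
  have "(sw (int (Suc m)) b \<circ> h) (int (Suc m)) = b" using sp_basic(3)[OF h] by (simp add: sw_def)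
  moreover have "(sw (int (Suc m)) b' \<circ> h') (int (Suc m)) = b'" using sp_basic(3)[OF h'] by (simp add: sw_def)
  ultimately have bb: "b = b'" using e by metis
  have b0: "b \<noteq> 0" using b unfolding pm_set_def by auto
  have "h x = h' x" for x
  proof -
    have "sw (int (Suc m)) b (h x) = sw (int (Suc m)) b (h' x)" using e bb by (metis comp_apply)
    then show ?thesis using sw_invol[OF b0, of "int (Suc m)"] by (metis of_nat_0_less_iff zero_less_Suc)
  qed
  then show "h = h' \<and> b = b'" using bb by auto
qed

lemma finite_G: "finite (signed_perms m)"
proof -
  have "signed_perms m \<subseteq> {p. p permutes pm_set m}" unfolding signed_perms_def by auto
  then show ?thesis using finite_permutations[OF finite_pm_set] finite_subset by blast
qed

lemma sum_G_Suc: "(\<Sum>g\<in>signed_perms (Suc m). F g) = (\<Sum>h\<in>signed_perms m. \<Sum>b\<in>pm_set (Suc m). F (sw (int (Suc m)) b \<circ> h))"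
  unfolding G_Suc_eq sum.reindex[OF G_Suc_inj] by (simp add: sum.cartesian_product prod.case_distrib)

lemma card_G_Suc: "card (signed_perms (Suc m)) = card (signed_perms m) * (2 * Suc m)"
  unfolding G_Suc_eq card_image[OF G_Suc_inj] by (simp add: card_cartesian_product card_pm_set)

lemma sum_P: "(\<Sum>b\<in>pm_set (Suc m). F b) = F (int (Suc m)) + F (- int (Suc m)) + (\<Sum>b\<in>pm_set m. F b)"
proof -
  have "int (Suc m) \<notin> pm_set m" "- int (Suc m) \<notin> pm_set m" "int (Suc m) \<noteq> - int (Suc m)" unfolding pm_set_def by auto
  then show ?thesis by (simp add: pm_set_Suc finite_pm_set add.assoc)
qed

definition cL :: "nat \<Rightarrow> (int \<Rightarrow> int) \<Rightarrow> int" where "cL m g = (if cond_L m g then 1 else 0)"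
definition SA where "SA m = (\<Sum>g\<in>signed_perms m. cL m g)"
definition SB where "SB m = (\<Sum>g\<in>signed_perms m. cL m g * sign (underlying_perm m g))"

lemma G0: "signed_perms 0 = {id}" unfolding signed_perms_def by (auto simp: pm_set_0)

lemma SA_rec: "SA (Suc m) = (2 * int m + 1) * SA m"
proof -
  have "SA (Suc m) = (\<Sum>h\<in>signed_perms m. (2 * int m + 1) * cL m h)"
    unfolding SA_def sum_G_Suc
  proof (rule sum.cong[OF refl])
    fix h assume h: "h \<in> signed_perms m"
    have "(\<Sum>b\<in>pm_set m. cL (Suc m) (sw (int (Suc m)) b \<circ> h)) = (\<Sum>b\<in>pm_set m. cL m h)"
      by (rule sum.cong[OF refl]) (simp only: cL_def L_step[OF h])
    moreover have "cL (Suc m) (sw (int (Suc m)) (int (Suc m)) \<circ> h) = cL m h"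
      unfolding sw_id cL_def using L_id[OF h] by simp
    moreover have "cL (Suc m) (sw (int (Suc m)) (- int (Suc m)) \<circ> h) = 0"
      unfolding cL_def using L_neg[OF h] by simp
    ultimately show "(\<Sum>b\<in>pm_set (Suc m). cL (Suc m) (sw (int (Suc m)) b \<circ> h)) = (2 * int m + 1) * cL m h"
      unfolding sum_P by (simp add: card_pm_set algebra_simps)
  qed
  then show ?thesis unfolding SA_def by (simp add: sum_distrib_left)
qed

lemma SB_rec: "SB (Suc m) = (1 - 2 * int m) * SB m"
proof -
  have "SB (Suc m) = (\<Sum>h\<in>signed_perms m. (1 - 2 * int m) * (cL m h * sign (underlying_perm m h)))"
    unfolding SB_def sum_G_Suc
  proof (rule sum.cong[OF refl])
    fix h assume h: "h \<in> signed_perms m"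
    have "(\<Sum>b\<in>pm_set m. cL (Suc m) (sw (int (Suc m)) b \<circ> h) * sign (underlying_perm (Suc m) (sw (int (Suc m)) b \<circ> h)))
       = (\<Sum>b\<in>pm_set m. - (cL m h * sign (underlying_perm m h)))"
    proof (rule sum.cong[OF refl])
      fix b assume b: "b \<in> pm_set m"
      show "cL (Suc m) (sw (int (Suc m)) b \<circ> h) * sign (underlying_perm (Suc m) (sw (int (Suc m)) b \<circ> h)) = - (cL m h * sign (underlying_perm m h))"
        unfolding cL_def L_step[OF h b] sign_step[OF h b] by simp
    qed
    moreover have "cL (Suc m) (sw (int (Suc m)) (int (Suc m)) \<circ> h) * sign (underlying_perm (Suc m) (sw (int (Suc m)) (int (Suc m)) \<circ> h)) = cL m h * sign (underlying_perm m h)"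
      unfolding sw_id cL_def using L_id[OF h] U_id[OF h] by simp
    moreover have "cL (Suc m) (sw (int (Suc m)) (- int (Suc m)) \<circ> h) = 0"
      unfolding cL_def using L_neg[OF h] by simp
    ultimately show "(\<Sum>b\<in>pm_set (Suc m). cL (Suc m) (sw (int (Suc m)) b \<circ> h) * sign (underlying_perm (Suc m) (sw (int (Suc m)) b \<circ> h))) = (1 - 2 * int m) * (cL m h * sign (underlying_perm m h))"
      unfolding sum_P by (simp add: card_pm_set algebra_simps)
  qed
  then show ?thesis unfolding SB_def by (simp add: sum_distrib_left)
qed

lemma SA0: "SA 0 = 1" unfolding SA_def G0 cL_def cond_L_def by (simp add: pm_set_0)
lemma SB0: "SB 0 = 1"
proof -
  have "underlying_perm 0 id = id" unfolding underlying_perm_def by auto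
  then show ?thesis unfolding SB_def G0 cL_def cond_L_def by (simp add: pm_set_0)
qed
lemma card_G0: "card (signed_perms 0) = 1" unfolding G0 by simp

lemma SA_closed: "SA m = (\<Prod>j<m. 2 * int j + 1)"
  by (induct m) (simp_all add: SA0 SA_rec)
lemma SB_closed: "SB m = (\<Prod>j<m. 1 - 2 * int j)"
  by (induct m) (simp_all add: SB0 SB_rec mult.commute)
lemma card_G: "card (signed_perms m) = 2 ^ m * fact m"
  by (induct m) (simp_all add: card_G0 card_G_Suc algebra_simps)




lemma PA_fact: "(\<Prod>j<m. 2 * j + 1) * 2 ^ m * fact m = (fact (2 * m) :: nat)"
proof (induct m)
  case (Suc m)
  have "fact (2 * Suc m) = (2 * m + 2) * ((2 * m + 1) * (fact (2 * m) :: nat))"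
    by (simp add: fact_Suc algebra_simps)
  also have "\<dots> = (2 * m + 2) * ((2 * m + 1) * ((\<Prod>j<m. 2 * j + 1) * 2 ^ m * fact m))" using Suc by simp
  finally show ?case by (simp add: fact_Suc algebra_simps)
qed simp

lemma SA_nat: "SA m = int (\<Prod>j<m. 2 * j + 1)"
  unfolding SA_closed by (simp add: of_nat_prod add.commute)

lemma ratio1: "real_of_int (SA m) / real (2 ^ m * fact m) = real ((2*m) choose m) / 4 ^ m"
proof -
  define P where "P = (\<Prod>j<m. 2 * j + 1 :: nat)"
  have "P * 2 ^ m * fact m = fact (2 * m)" unfolding P_def by (rule PA_fact)
  then have "real (P * 2 ^ m * fact m) = real (fact (2 * m))" by (rule arg_cong)
  then have e1: "real P * 2 ^ m * fact m = fact (2 * m)"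
    by (simp only: of_nat_mult of_nat_power of_nat_numeral of_nat_fact)
  have "fact m * fact (2 * m - m) * ((2*m) choose m) = fact (2 * m)" by (rule binomial_fact_lemma) simp
  then have "fact m * fact m * ((2*m) choose m) = (fact (2 * m) :: nat)" by simp
  then have "real (fact m * fact m * ((2*m) choose m)) = real (fact (2 * m))" by (rule arg_cong)
  then have e2: "fact m * fact m * real ((2*m) choose m) = fact (2 * m)"
    by (simp only: of_nat_mult of_nat_fact)
  have f0: "(fact m :: real) > 0" by simp
  have "(real P * 2 ^ m) * fact m = (fact m * real ((2*m) choose m)) * fact m"
    using e1 e2 by (simp add: ac_simps)
  then have e3: "real P * 2 ^ m = fact m * real ((2*m) choose m)"
    using f0 by simp
  have "real_of_int (SA m) = real P" unfolding SA_nat P_def by simp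
  moreover have "real P / (2 ^ m * fact m) = real ((2*m) choose m) / 4 ^ m"
  proof -
    have "(4::real) ^ m = 2 ^ m * 2 ^ m" by (simp add: power_mult_distrib[symmetric])
    then show ?thesis using e3 f0 by (simp add: field_simps)
  qed
  ultimately show ?thesis by simp
qed

lemma SB_SA: "SB (Suc k) = (-1) ^ k * SA k"
proof (induct k)
  case 0 then show ?case using SB_rec[of 0] SB0 SA0 by simp
next
  case (Suc k) then show ?case using SB_rec[of "Suc k"] SA_rec[of k] by (simp add: algebra_simps)
qed

theorem proposition12:
  fixes m :: nat
  assumes "m \<ge> 1"
  shows "inner_prod (signed_perms m) (chi_L m)
           (\<lambda>g. det_char m g * eps_char m g * psi_char g)
         = of_real (real ((2*m) choose m) / 4 ^ m)
       \<and> inner_prod (signed_perms m) (chi_L m) (\<lambda>g. det_char m g * psi_char g)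
         = of_real ((-1) ^ (m+1) / (2 * real m) * (real ((2*m-2) choose (m-1)) / 4 ^ (m-1)))
       \<and> inner_prod (signed_perms m) (chi_L m)
           (\<lambda>g. det_char m g * eps_char m g * psi_char g)
         = of_real (real (card (L_set m)) / real (card (signed_perms m)))"
proof -
  have chi: "chi_L m g = of_int (cL m g)" for g unfolding chi_L_def cL_def by simp
  have s1: "(\<Sum>g\<in>signed_perms m. chi_L m g * cnj (det_char m g * eps_char m g * psi_char g)) = of_int (SA m)"
  proof -
    have "det_char m g * eps_char m g * psi_char g = 1" for g
    proof -
      have "det_char m g * eps_char m g = of_int (sign (underlying_perm m g) * sign (underlying_perm m g))"
        unfolding det_char_def eps_char_def by (simp only: of_int_mult)
      also have "\<dots> = 1" by (simp only: sign_idempotent of_int_1)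
      finally show ?thesis unfolding psi_char_def by simp
    qed
    then show ?thesis unfolding SA_def chi by simp
  qed
  have s2: "(\<Sum>g\<in>signed_perms m. chi_L m g * cnj (det_char m g * psi_char g)) = of_int (SB m)"
    unfolding SB_def chi det_char_def psi_char_def by simp
  have cardL: "card (L_set m) = SA m"
  proof -
    have "SA m = (\<Sum>g\<in>{g\<in>signed_perms m. cond_L m g}. 1)"
      unfolding SA_def cL_def using sum.inter_filter[OF finite_G[of m], of "\<lambda>_. 1::int" "cond_L m"] by simp
    then show ?thesis unfolding L_set_def by simp
  qed
  have c: "card (signed_perms m) = 2 ^ m * fact m" by (rule card_G)
  have A: "inner_prod (signed_perms m) (chi_L m) (\<lambda>g. det_char m g * eps_char m g * psi_char g)
      = of_real (real_of_int (SA m) / real (2 ^ m * fact m))"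
    unfolding inner_prod_def s1 c by simp
  obtain k where k: "m = Suc k" using assms by (cases m) auto
  have B: "inner_prod (signed_perms m) (chi_L m) (\<lambda>g. det_char m g * psi_char g)
      = of_real (real_of_int (SB m) / real (2 ^ m * fact m))"
    unfolding inner_prod_def s2 c by simp
  have r2: "real_of_int (SB m) / real (2 ^ m * fact m) = (-1) ^ (m+1) / (2 * real m) * (real ((2*m-2) choose (m-1)) / 4 ^ (m-1))"
  proof -
    have q: "real_of_int (SA k) / real (2 ^ k * fact k) = real ((2*k) choose k) / 4 ^ k" by (rule ratio1)
    have "real_of_int (SB m) / real (2 ^ m * fact m) = (-1) ^ k * (real_of_int (SA k) / real (2 ^ k * fact k)) / (2 * real m)"
      unfolding k SB_SA by (simp add: field_simps)
    also have "\<dots> = (-1) ^ (m+1) / (2 * real m) * (real ((2*m-2) choose (m-1)) / 4 ^ (m-1))"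
      unfolding q unfolding k by simp
    finally show ?thesis .
  qed
  have rl: "real (card (L_set m)) = real_of_int (SA m)" using cardL by (metis of_int_of_nat_eq)
  show ?thesis
  proof (intro conjI)
    show "inner_prod (signed_perms m) (chi_L m) (\<lambda>g. det_char m g * eps_char m g * psi_char g)
         = of_real (real ((2*m) choose m) / 4 ^ m)" unfolding A ratio1 by (rule refl)
    show "inner_prod (signed_perms m) (chi_L m) (\<lambda>g. det_char m g * psi_char g)
         = of_real ((-1) ^ (m+1) / (2 * real m) * (real ((2*m-2) choose (m-1)) / 4 ^ (m-1)))"
      unfolding B r2 by (rule refl)
    show "inner_prod (signed_perms m) (chi_L m) (\<lambda>g. det_char m g * eps_char m g * psi_char g)
         = of_real (real (card (L_set m)) / real (card (signed_perms m)))"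
      unfolding A rl c by (rule refl)
  qed
qed


end
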